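(* Let $k$ be a real number that is not an integer, and for $j\ge1$ let $\nu_j=\frac{d^{j-1}}{dk^{j-1}}\big(\pi\cot(k\pi)\big)$. Then for $n\in\mathbb{N}_0$, $$B_n(\nu_1,\nu_2,\dots,\nu_n)=\begin{cases}(-1)^j\pi^{2j}, & n=2j,\ j\in\mathbb{N}_0,\\ (-1)^j\pi^{2j+1}\cot(k\pi), & n=2j+1,\ j\in\mathbb{N}_0.\end{cases}$$
   Context: $B_n(s_1,\dots,s_n)$ denotes the complete Bell polynomial, defined by $\exp\big(\sum_{j\ge1}s_j t^j/j!\big)=\sum_{n\ge0}B_n(s_1,\dots,s_n)t^n/n!$; $B_0=1$. *)

theory Defs
  imports "HOL-Analysis.Analysis" "HOL-Computational_Algebra.Formal_Power_Series"
begin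

text \<open>The argument s is indexed from 1 (s 0 is ignored).\<close>
definition bell_complete :: "nat \<Rightarrow> (nat \<Rightarrow> real) \<Rightarrow> real" where
  "bell_complete n s =
     fact n * (fps_nth (fps_exp 1 oo Abs_fps (\<lambda>j. if j = 0 then 0 else s j / fact j)) n)"

end

theory Submission imports Defs begin

lemma Suc_choose': "Suc n choose k = (n choose k) + (if k = 0 then 0 else (n choose (k-1)))"
  by (cases k) simp_all

lemma leibniz_real:
  fixes u v :: "real \<Rightarrow> real"
  assumes U: "open U" and x: "x \<in> U"
   and du: "\<And>i y. i < n \<Longrightarrow> y \<in> U \<Longrightarrow> ((deriv^^i) u has_real_derivative deriv ((deriv^^i) u) y) (at y)"
   and dv: "\<And>i y. i < n \<Longrightarrow> y \<in> U \<Longrightarrow> ((deriv^^i) v has_real_derivative deriv ((deriv^^i) v) y) (at y)"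
  shows "(deriv^^n) (\<lambda>y. u y * v y) x = (\<Sum>i=0..n. of_nat (n choose i) * (deriv^^i) u x * (deriv^^(n-i)) v x)"
using x du dv
proof (induction n arbitrary: x)
  case 0 then show ?case by simp
next
  case (Suc n z)
  have *: "\<And>i. i \<le> n \<Longrightarrow> ((deriv ^^ i) u has_field_derivative deriv ((deriv ^^ i) u) z) (at z)"
          "\<And>i. i \<le> n \<Longrightarrow> ((deriv ^^ i) v has_field_derivative deriv ((deriv ^^ i) v) z) (at z)"
    using Suc.prems by auto
  have IH: "\<And>y. y \<in> U \<Longrightarrow> (deriv^^n) (\<lambda>y. u y * v y) y = (\<Sum>i=0..n. of_nat (n choose i) * (deriv^^i) u y * (deriv^^(n-i)) v y)"
    using Suc.IH Suc.prems by auto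
  have sumeq: "(\<Sum>i = 0..n.
               of_nat (n choose i) * (deriv ((deriv ^^ i) u) z * (deriv ^^ (n-i)) v z + deriv ((deriv ^^ (n-i)) v) z * (deriv ^^ i) u z)) =
            v z * deriv ((deriv ^^ n) u) z + (\<Sum>i = 0..n. (deriv ^^ i) u z * (of_nat (Suc n choose i) * (deriv ^^ (Suc n - i)) v z))"
    apply (simp add: Suc_choose' algebra_simps sum.distrib)
    apply (subst (4) sum_Suc_reindex)
    apply (auto simp: algebra_simps Suc_diff_le intro: sum.cong)
    done
  have "((deriv ^^ n) (\<lambda>w. u w * v w) has_field_derivative
         (\<Sum>i = 0..Suc n. (Suc n choose i) * (deriv ^^ i) u z * (deriv ^^ (Suc n - i)) v z))
        (at z)"
    apply (rule has_field_derivative_transform_within_open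
        [of "\<lambda>w. (\<Sum>i = 0..n. of_nat (n choose i) * (deriv ^^ i) u w * (deriv ^^ (n-i)) v w)" _ _ U])
       apply (simp add: algebra_simps)
       apply (rule derivative_eq_intros | simp)+
           apply (auto intro: DERIV_mult * U Suc.prems IH [symmetric])
    by (metis (no_types, lifting) mult.commute sum.cong sumeq)
  then show ?case
    unfolding funpow.simps o_apply
    by (simp add: DERIV_imp_deriv)
qed


lemma lin_hd:
  fixes h :: "real \<Rightarrow> real"
  assumes U: "open U" and z: "z \<in> U"
   and dh: "\<And>i y. i < n \<Longrightarrow> y \<in> U \<Longrightarrow> ((deriv^^i) h has_real_derivative deriv ((deriv^^i) h) y) (at y)"
  shows "(deriv^^n) (\<lambda>w. a + b * h w) z = (if n = 0 then a + b * h z else b * (deriv^^n) h z)"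
using z dh
proof (induction n arbitrary: z)
  case 0 then show ?case by simp
next
  case (Suc n z)
  have IH: "\<And>y. y \<in> U \<Longrightarrow> (deriv^^n) (\<lambda>w. a + b * h w) y = (if n = 0 then a + b * h y else b * (deriv^^n) h y)"
    using Suc.IH Suc.prems by auto
  have d: "((deriv^^n) h has_real_derivative deriv ((deriv^^n) h) z) (at z)"
    using Suc.prems by auto
  have "((\<lambda>y. if n = 0 then a + b * h y else b * (deriv^^n) h y) has_real_derivative b * deriv ((deriv^^n) h) z) (at z)"
  proof (cases "n = 0")
    case True
    then show ?thesis using d by (auto intro!: derivative_eq_intros)
  next
    case False
    then show ?thesis using d by (auto intro!: derivative_eq_intros)
  qed
  then have "((deriv^^n) (\<lambda>w. a + b * h w) has_real_derivative b * deriv ((deriv^^n) h) z) (at z)"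
    by (rule has_field_derivative_transform_within_open[OF _ U Suc.prems(1)]) (simp add: IH)
  then show ?case by (simp add: DERIV_imp_deriv)
qed

definition fc :: "real \<Rightarrow> real" where "fc x = pi * cot (x * pi)"

lemma open_U: "open (- \<int> :: real set)" by auto

lemma sin_nz: "x \<notin> \<int> \<Longrightarrow> sin (x * pi) \<noteq> 0"
proof
  assume "x \<notin> \<int>" "sin (x * pi) = 0"
  then obtain i :: int where "x * pi = of_int i * pi" using sin_zero_iff_int2 by blast
  then have "x = of_int i" by simp
  then show False using \<open>x \<notin> \<int>\<close> by auto
qed

lemma fc_deriv: "x \<notin> \<int> \<Longrightarrow> (fc has_real_derivative (- (pi^2) - fc x * fc x)) (at x)"
proof -
  assume x: "x \<notin> \<int>"
  have s: "sin (x * pi) \<noteq> 0" using sin_nz[OF x] .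
  have "(fc has_real_derivative pi * (- inverse ((sin (x*pi))\<^sup>2) * pi)) (at x)"
    unfolding fc_def[abs_def]
    by (rule DERIV_cmult, rule DERIV_chain2[of cot _ "\<lambda>x. x*pi", OF DERIV_cot[OF s]]) (auto intro!: derivative_eq_intros)
  moreover have "pi * (- inverse ((sin (x*pi))\<^sup>2) * pi) = - (pi^2) - fc x * fc x"
    using s sin_cos_squared_add[of "x*pi"] unfolding fc_def cot_def
    by (simp add: field_simps power2_eq_square) (simp add: distrib_left[symmetric] mult.commute)
  ultimately show ?thesis by simp
qed

lemma fc_smooth: "y \<notin> \<int> \<Longrightarrow> ((deriv^^n) fc has_real_derivative deriv ((deriv^^n) fc) y) (at y)"
proof (induction n arbitrary: y rule: less_induct)
  case (less n y)
  show ?case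
  proof (cases n)
    case 0
    then show ?thesis using fc_deriv[OF less.prems] by (simp add: DERIV_imp_deriv)
  next
    case (Suc m)
    define g where "g = (\<lambda>w. - (pi^2) + (-1) * (fc w * fc w))"
    have dfc: "\<And>w. w \<in> - \<int> \<Longrightarrow> deriv fc w = g w"
      using fc_deriv DERIV_imp_deriv unfolding g_def by fastforce
    have IH: "\<And>i w. i \<le> m \<Longrightarrow> w \<in> - \<int> \<Longrightarrow> ((deriv^^i) fc has_real_derivative deriv ((deriv^^i) fc) w) (at w)"
      using less.IH Suc by auto
    have dhg: "\<And>i w. i \<le> m \<Longrightarrow> w \<in> - \<int> \<Longrightarrow> ((deriv^^i) (\<lambda>y. fc y * fc y) has_real_derivative deriv ((deriv^^i) (\<lambda>y. fc y * fc y)) w) (at w)"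
    proof -
      fix i w assume i: "i \<le> m" and w: "w \<in> - (\<int>::real set)"
      have L: "\<And>w. w \<in> - \<int> \<Longrightarrow> (deriv^^i) (\<lambda>y. fc y * fc y) w = (\<Sum>j=0..i. of_nat (i choose j) * (deriv^^j) fc w * (deriv^^(i-j)) fc w)"
        by (rule leibniz_real[OF open_U]) (use i in \<open>auto intro: IH\<close>)
      have dL: "((\<lambda>w. \<Sum>j=0..i. of_nat (i choose j) * (deriv^^j) fc w * (deriv^^(i-j)) fc w) has_real_derivative
          (\<Sum>j=0..i. of_nat (i choose j) * (deriv ((deriv^^j) fc) w * (deriv^^(i-j)) fc w + (deriv^^j) fc w * deriv ((deriv^^(i-j)) fc) w))) (at w)"
        using w i by (auto intro!: derivative_eq_intros IH sum.cong simp: algebra_simps)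
      have "((deriv^^i) (\<lambda>y. fc y * fc y) has_real_derivative
          (\<Sum>j=0..i. of_nat (i choose j) * (deriv ((deriv^^j) fc) w * (deriv^^(i-j)) fc w + (deriv^^j) fc w * deriv ((deriv^^(i-j)) fc) w))) (at w)"
        by (rule has_field_derivative_transform_within_open[OF dL open_U]) (use w L in auto)
      then show "((deriv^^i) (\<lambda>y. fc y * fc y) has_real_derivative deriv ((deriv^^i) (\<lambda>y. fc y * fc y)) w) (at w)"
        by (simp add: DERIV_imp_deriv)
    qed
    have dh: "((deriv^^m) (\<lambda>y. fc y * fc y) has_real_derivative deriv ((deriv^^m) (\<lambda>y. fc y * fc y)) y) (at y)"
      using dhg less.prems by auto
    have G: "\<And>w. w \<in> - \<int> \<Longrightarrow> (deriv^^m) g w = (if m = 0 then - (pi^2) + (-1) * (fc w * fc w) else (-1) * (deriv^^m) (\<lambda>y. fc y * fc y) w)"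
      unfolding g_def
      by (rule lin_hd[OF open_U]) (auto intro: dhg simp: less.prems)
    have "\<exists>D. ((deriv^^m) g has_real_derivative D) (at y)"
    proof (cases "m = 0")
      case True
      have "((\<lambda>w. - (pi^2) + (-1) * (fc w * fc w)) has_real_derivative (-1) * (deriv fc y * fc y + fc y * deriv fc y)) (at y)"
        using IH[of 0 y] less.prems by (auto intro!: derivative_eq_intros)
      then show ?thesis using True unfolding g_def by auto
    next
      case False
      have "((\<lambda>w. (-1) * (deriv^^m) (\<lambda>y. fc y * fc y) w) has_real_derivative (-1) * deriv ((deriv^^m) (\<lambda>y. fc y * fc y)) y) (at y)"
        by (rule DERIV_cmult[OF dh])
      then have "((deriv^^m) g has_real_derivative (-1) * deriv ((deriv^^m) (\<lambda>y. fc y * fc y)) y) (at y)"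
        by (rule has_field_derivative_transform_within_open[OF _ open_U]) (use less.prems G False in auto)
      then show ?thesis by blast
    qed
    then obtain D where D: "((deriv^^m) g has_real_derivative D) (at y)" by blast
    have eqU: "\<And>w. w \<in> - \<int> \<Longrightarrow> (deriv^^m) g w = (deriv^^n) fc w"
    proof -
      fix w :: real assume w: "w \<in> - \<int>"
      have "(deriv^^m) (deriv fc) w = (deriv^^m) g w"
        by (rule higher_deriv_cong_ev) (use w open_U dfc in \<open>auto intro: eventually_mono[OF eventually_nhds_in_open]\<close>)
      then show "(deriv^^m) g w = (deriv^^n) fc w"
        using Suc by (simp add: funpow_Suc_right del: funpow.simps)
    qed
    have "((deriv^^n) fc has_real_derivative D) (at y)"
      by (rule has_field_derivative_transform_within_open[OF D open_U]) (use less.prems eqU in auto)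
    then show ?thesis by (simp add: DERIV_imp_deriv)
  qed
qed


definition sc :: "nat \<Rightarrow> real \<Rightarrow> real" where
  "sc n x = (-1)^(n div 2) * (if even n then sin (x*pi) else cos (x*pi))"

lemma sc_deriv: "((\<lambda>x. pi^n * sc n x) has_real_derivative pi^(Suc n) * sc (Suc n) x) (at x)"
proof (cases "even n")
  case True
  then have "Suc n div 2 = n div 2" by presburger
  with True show ?thesis unfolding sc_def
    by (auto intro!: derivative_eq_intros simp: algebra_simps)
next
  case False
  then have "Suc n div 2 = Suc (n div 2)" by presburger
  with False show ?thesis unfolding sc_def
    by (auto intro!: derivative_eq_intros simp: algebra_simps)
qed

lemma sd: "(deriv^^n) (\<lambda>x. sin (x*pi)) = (\<lambda>x. pi^n * sc n x)"
proof (induction n)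
  case 0 then show ?case by (simp add: sc_def)
next
  case (Suc n)
  show ?case by (simp add: Suc DERIV_imp_deriv[OF sc_deriv] del: power_Suc)
qed

lemma recur:
  assumes k: "k \<notin> \<int>"
  shows "pi^(Suc n) * sc (Suc n) k = (\<Sum>i=0..n. of_nat (n choose i) * (pi^i * sc i k) * (deriv^^(n-i)) fc k)"
proof -
  have L: "(deriv^^n) (\<lambda>y. sin (y*pi) * fc y) k = (\<Sum>i=0..n. of_nat (n choose i) * (deriv^^i) (\<lambda>y. sin (y*pi)) k * (deriv^^(n-i)) fc k)"
    by (rule leibniz_real[OF open_U]) (use k fc_smooth sc_deriv in \<open>auto simp: sd DERIV_imp_deriv[OF sc_deriv] simp del: power_Suc\<close>)
  have eq: "\<And>y. y \<in> - \<int> \<Longrightarrow> sin (y*pi) * fc y = deriv (\<lambda>x. sin (x*pi)) y"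
    using sd[of 1] sin_nz unfolding fc_def cot_def sc_def
    by (auto simp: fun_eq_iff)
  have "(deriv^^n) (\<lambda>y. sin (y*pi) * fc y) k = (deriv^^n) (deriv (\<lambda>x. sin (x*pi))) k"
    by (rule higher_deriv_cong_ev) (use k open_U eq in \<open>auto intro: eventually_mono[OF eventually_nhds_in_open]\<close>)
  also have "\<dots> = (deriv^^Suc n) (\<lambda>x. sin (x*pi)) k"
    by (simp add: funpow_Suc_right del: funpow.simps)
  finally show ?thesis using L by (simp add: sd DERIV_imp_deriv[OF sc_deriv] del: power_Suc)
qed


lemma fps_rec:
  fixes \<nu> :: "nat \<Rightarrow> real"
  defines "A \<equiv> Abs_fps (\<lambda>j. if j = 0 then 0 else \<nu> j / fact j)"
  shows "fact (Suc n) * fps_nth (fps_exp 1 oo A) (Suc n) =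
     (\<Sum>i=0..n. of_nat (n choose i) * (fact i * fps_nth (fps_exp 1 oo A) i) * \<nu> (Suc (n - i)))"
proof -
  define E where "E = fps_exp 1 oo A"
  have A0: "fps_nth A 0 = 0" unfolding A_def by simp
  have "fps_deriv E = E * fps_deriv A"
    unfolding E_def by (simp add: fps_compose_deriv[OF A0])
  then have "fps_nth (fps_deriv E) n = fps_nth (E * fps_deriv A) n" by simp
  then have "of_nat (Suc n) * fps_nth E (Suc n) = (\<Sum>i=0..n. fps_nth E i * (of_nat (Suc (n - i)) * (\<nu> (Suc (n-i)) / fact (Suc (n-i)))))"
    by (simp add: fps_mult_nth A_def)
  also have "\<dots> = (\<Sum>i=0..n. fps_nth E i * (\<nu> (Suc (n-i)) / fact (n-i)))"
  proof (intro sum.cong refl)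
    fix i
    have f: "\<And>m x. of_nat (Suc m) * (x / fact (Suc m)) = x / (fact m :: real)"
      by (simp add: field_simps del: of_nat_Suc)
    show "fps_nth E i * (of_nat (Suc (n - i)) * (\<nu> (Suc (n-i)) / fact (Suc (n-i)))) = fps_nth E i * (\<nu> (Suc (n-i)) / fact (n-i))"
      by (simp only: f)
  qed
  finally have *: "of_nat (Suc n) * fps_nth E (Suc n) = (\<Sum>i=0..n. fps_nth E i * (\<nu> (Suc (n-i)) / fact (n-i)))" .
  have "fact (Suc n) * fps_nth E (Suc n) = fact n * (of_nat (Suc n) * fps_nth E (Suc n))"
    by (simp add: algebra_simps)
  also have "\<dots> = (\<Sum>i=0..n. fact n * (fps_nth E i * (\<nu> (Suc (n-i)) / fact (n-i))))"
    by (subst *) (simp add: sum_distrib_left)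
  also have "\<dots> = (\<Sum>i=0..n. of_nat (n choose i) * (fact i * fps_nth E i) * \<nu> (Suc (n - i)))"
    by (intro sum.cong refl) (simp add: binomial_fact field_simps)
  finally show ?thesis unfolding E_def .
qed

theorem lemma2:
  fixes k :: real and j :: nat
  assumes "k \<notin> \<int>"
  defines "\<nu> \<equiv> (\<lambda>i::nat. (deriv ^^ (i - 1)) (\<lambda>x. pi * cot (x * pi)) k)"
  shows "bell_complete (2 * j) \<nu> = (-1) ^ j * pi ^ (2 * j) \<and>
         bell_complete (2 * j + 1) \<nu> = (-1) ^ j * pi ^ (2 * j + 1) * cot (k * pi)"
proof -
  define A where "A = Abs_fps (\<lambda>j. if j = 0 then 0 else \<nu> j / fact j)"
  define c where "c n = pi^n * sc n k / sin (k*pi)" for n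
  have s: "sin (k*pi) \<noteq> 0" using sin_nz[OF assms(1)] .
  have nu: "\<nu> (Suc m) = (deriv^^m) fc k" for m
    unfolding \<nu>_def fc_def[abs_def] by simp
  have main: "fact n * fps_nth (fps_exp 1 oo A) n = c n" for n
  proof (induction n rule: nat_less_induct)
    case (1 n)
    show ?case
    proof (cases n)
      case 0
      then show ?thesis using s by (simp add: c_def sc_def A_def)
    next
      case (Suc m)
      have "fact n * fps_nth (fps_exp 1 oo A) n = (\<Sum>i=0..m. of_nat (m choose i) * c i * \<nu> (Suc (m - i)))"
        unfolding Suc A_def fps_rec using 1 Suc by (intro sum.cong refl) (simp add: A_def)
      also have "\<dots> = (\<Sum>i=0..m. of_nat (m choose i) * (pi^i * sc i k) * (deriv^^(m-i)) fc k) / sin (k*pi)"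
        unfolding sum_divide_distrib c_def nu by (intro sum.cong refl) simp
      also have "\<dots> = c n"
        unfolding recur[OF assms(1), symmetric] c_def Suc ..
      finally show ?thesis .
    qed
  qed
  have b: "bell_complete n \<nu> = c n" for n
    using main[of n] unfolding bell_complete_def A_def by simp
  have e1: "(2 * j) div 2 = j" "(2*j+1) div 2 = j" by auto
  show ?thesis
    unfolding b c_def sc_def e1 using s by (simp add: cot_def)
qed

end
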